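(* Let $A$ be an associative unital algebra and $(H,\pi_l,\pi_r,\psi_l,\psi_r)$ an L-R-twisting datum for $A$. Then $(H,\pi_r,\psi_r)$ is a right twisting datum for the left twisted algebra $(A,\star)$ and the corresponding right twisted product on $(A,\star)$ equals the L-R-twisted product $\bullet$; likewise $(H,\pi_l,\psi_l)$ is a left twisting datum for the right twisted algebra $(A,\diamond)$ and the corresponding left twisted product on $(A,\diamond)$ equals $\bullet$.
   Context: Work over a field $k$; $H$ an ordinary bialgebra, $\Delta(h)=h_1\otimes h_2$. An L-R-twisting datum for an algebra $A$: $H$-bimodule algebra structure on $A$ (actions $h\cdot a$, $a\cdot h$, with $h\cdot(ab)=(h_1\cdot a)(h_2\cdot b)$, $(ab)\cdot h=(a\cdot h_1)(b\cdot h_2)$, $h\cdot1=1\cdot h=\varepsilon(h)1$), $H$-bicomodule algebra structure on $A$ (algebra maps $\psi_l(a)=a_{[-1]}\otimes a_{[0]}$, $\psi_r(a)=a_{<0>}\otimes a_{<1>}$ forming an $H$-bicomodule), and compatibilities $(h\cdot a)_{[-1]}\otimes(h\cdot a)_{[0]}=a_{[-1]}\otimes h\cdot a_{[0]}$, $(h\cdot a)_{<0>}\otimes(h\cdot a)_{<1>}=h\cdot a_{<0>}\otimes a_{<1>}$, $(a\cdot h)_{[-1]}\otimes(a\cdot h)_{[0]}=a_{[-1]}\otimes a_{[0]}\cdot h$, $(a\cdot h)_{<0>}\otimes(a\cdot h)_{<1>}=a_{<0>}\cdot h\otimes a_{<1>}$. The L-R-twisted product is $a\bullet b=(a_{[0]}\cdot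 b_{<1>})(a_{[-1]}\cdot b_{<0>})$. A left twisting datum $(H,\pi,\psi)$ for an algebra $A$: $A$ is a left $H$-module algebra ($h\cdot a$) and left $H$-comodule algebra ($a\mapsto a_{(-1)}\otimes a_{(0)}$) with $(h\cdot a)_{(-1)}\otimes(h\cdot a)_{(0)}=a_{(-1)}\otimes h\cdot a_{(0)}$; the left twisted product is $a\star b=a_{(0)}(a_{(-1)}\cdot b)$. A right twisting datum $(H,\pi_r,\psi_r)$: $A$ a right $H$-module algebra ($a\cdot h$) and right $H$-comodule algebra ($a\mapsto a_{<0>}\otimes a_{<1>}$) with $(a\cdot h)_{<0>}\otimes(a\cdot h)_{<1>}=a_{<0>}\cdot h\otimes a_{<1>}$; the right twisted product is $a\diamond b=(a\cdot b_{<1>})b_{<0>}$. In the statement, $\star$ is computed from $(H,\pi_l,\psi_l)$ and $\diamond$ from $(H,\pi_r,\psi_r)$. *)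

theory Defs
  imports Complex_Main
begin

text \<open>
  A k-vector space is a
  type of class ab_group_add together with a scalar multiplication s, required to satisfy
  the library locale vector_space s.  An element of a tensor product V (x) W is represented
  by a finite formal sum, i.e. a list of pairs [(v1,w1),...,(vn,wn)] standing for
  v1 (x) w1 + ... + vn (x) wn (similarly triples for V (x) W (x) U).  Equality of two such
  formal sums in V (x) W is equality of the tensors they denote; since over a field the
  canonical map V (x) W -> (V (x) W)** is injective and (V (x) W)* = Bil(V x W, k), this is
  exactly: they agree under every k-valued bilinear form.  Sweedler notation
  Delta(h) = h1 (x) h2 is thus a function Delta :: 'h => ('h * 'h) list.
\<close>

definition bilinear_form ::
  "('k::field \<Rightarrow> 'v::ab_group_add \<Rightarrow> 'v) \<Rightarrow> ('k \<Rightarrow> 'w::ab_group_add \<Rightarrow> 'w) \<Rightarrow> ('v \<Rightarrow> 'w \<Rightarrow> 'k) \<Rightarrow> bool" where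
  "bilinear_form sV sW \<beta> \<longleftrightarrow>
     (\<forall>w. Vector_Spaces.linear sV times (\<lambda>v. \<beta> v w)) \<and> (\<forall>v. Vector_Spaces.linear sW times (\<beta> v))"

definition trilinear_form ::
  "('k::field \<Rightarrow> 'u::ab_group_add \<Rightarrow> 'u) \<Rightarrow> ('k \<Rightarrow> 'v::ab_group_add \<Rightarrow> 'v) \<Rightarrow>
   ('k \<Rightarrow> 'w::ab_group_add \<Rightarrow> 'w) \<Rightarrow> ('u \<Rightarrow> 'v \<Rightarrow> 'w \<Rightarrow> 'k) \<Rightarrow> bool" where
  "trilinear_form sU sV sW \<gamma> \<longleftrightarrow>
     (\<forall>v w. Vector_Spaces.linear sU times (\<lambda>u. \<gamma> u v w)) \<and> (\<forall>u w. Vector_Spaces.linear sV times (\<lambda>v. \<gamma> u v w)) \<and>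
     (\<forall>u v. Vector_Spaces.linear sW times (\<lambda>w. \<gamma> u v w))"

definition tensor_eq2 ::
  "('k::field \<Rightarrow> 'v::ab_group_add \<Rightarrow> 'v) \<Rightarrow> ('k \<Rightarrow> 'w::ab_group_add \<Rightarrow> 'w) \<Rightarrow>
   ('v \<times> 'w) list \<Rightarrow> ('v \<times> 'w) list \<Rightarrow> bool" where
  "tensor_eq2 sV sW xs ys \<longleftrightarrow>
     (\<forall>\<beta> :: 'v \<Rightarrow> 'w \<Rightarrow> 'k. bilinear_form sV sW \<beta> \<longrightarrow>
        sum_list (map (\<lambda>(v, w). \<beta> v w) xs) = sum_list (map (\<lambda>(v, w). \<beta> v w) ys))"

definition tensor_eq3 ::
  "('k::field \<Rightarrow> 'u::ab_group_add \<Rightarrow> 'u) \<Rightarrow> ('k \<Rightarrow> 'v::ab_group_add \<Rightarrow> 'v) \<Rightarrow>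
   ('k \<Rightarrow> 'w::ab_group_add \<Rightarrow> 'w) \<Rightarrow> ('u \<times> 'v \<times> 'w) list \<Rightarrow> ('u \<times> 'v \<times> 'w) list \<Rightarrow> bool" where
  "tensor_eq3 sU sV sW xs ys \<longleftrightarrow>
     (\<forall>\<gamma> :: 'u \<Rightarrow> 'v \<Rightarrow> 'w \<Rightarrow> 'k. trilinear_form sU sV sW \<gamma> \<longrightarrow>
        sum_list (map (\<lambda>(u, v, w). \<gamma> u v w) xs) = sum_list (map (\<lambda>(u, v, w). \<gamma> u v w) ys))"

definition k_algebra ::
  "('k::field \<Rightarrow> 'a::ab_group_add \<Rightarrow> 'a) \<Rightarrow> ('a \<Rightarrow> 'a \<Rightarrow> 'a) \<Rightarrow> 'a \<Rightarrow> bool" where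
  "k_algebra s m u \<longleftrightarrow> vector_space s \<and>
     (\<forall>b. Vector_Spaces.linear s s (\<lambda>a. m a b)) \<and> (\<forall>a. Vector_Spaces.linear s s (m a)) \<and>
     (\<forall>a b c. m (m a b) c = m a (m b c)) \<and> (\<forall>a. m u a = a \<and> m a u = a)"

definition bialgebra ::
  "('k::field \<Rightarrow> 'h::ab_group_add \<Rightarrow> 'h) \<Rightarrow> ('h \<Rightarrow> 'h \<Rightarrow> 'h) \<Rightarrow> 'h \<Rightarrow>
   ('h \<Rightarrow> ('h \<times> 'h) list) \<Rightarrow> ('h \<Rightarrow> 'k) \<Rightarrow> bool" where
  "bialgebra sH mH uH \<Delta> \<epsilon> \<longleftrightarrow> k_algebra sH mH uH \<and>
     \<comment> \<open>Delta linear\<close>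
     (\<forall>x y. tensor_eq2 sH sH (\<Delta> (x + y)) (\<Delta> x @ \<Delta> y)) \<and>
     (\<forall>c x. tensor_eq2 sH sH (\<Delta> (sH c x)) (map (\<lambda>(p, q). (sH c p, q)) (\<Delta> x))) \<and>
     \<comment> \<open>eps linear\<close>
     Vector_Spaces.linear sH times \<epsilon> \<and>
     \<comment> \<open>coassociativity\<close>
     (\<forall>x. tensor_eq3 sH sH sH
        [(p1, p2, q). (p, q) \<leftarrow> \<Delta> x, (p1, p2) \<leftarrow> \<Delta> p]
        [(p, q1, q2). (p, q) \<leftarrow> \<Delta> x, (q1, q2) \<leftarrow> \<Delta> q]) \<and>
     \<comment> \<open>counit\<close>
     (\<forall>x. sum_list (map (\<lambda>(p, q). sH (\<epsilon> p) q) (\<Delta> x)) = x \<and>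
          sum_list (map (\<lambda>(p, q). sH (\<epsilon> q) p) (\<Delta> x)) = x) \<and>
     \<comment> \<open>Delta and eps are algebra maps\<close>
     (\<forall>x y. tensor_eq2 sH sH (\<Delta> (mH x y)) [(mH p r, mH q t). (p, q) \<leftarrow> \<Delta> x, (r, t) \<leftarrow> \<Delta> y]) \<and>
     tensor_eq2 sH sH (\<Delta> uH) [(uH, uH)] \<and>
     (\<forall>x y. \<epsilon> (mH x y) = \<epsilon> x * \<epsilon> y) \<and> \<epsilon> uH = 1"

definition left_module_algebra ::
  "('k::field \<Rightarrow> 'h::ab_group_add \<Rightarrow> 'h) \<Rightarrow> ('h \<Rightarrow> 'h \<Rightarrow> 'h) \<Rightarrow> 'h \<Rightarrow>
   ('h \<Rightarrow> ('h \<times> 'h) list) \<Rightarrow> ('h \<Rightarrow> 'k) \<Rightarrow>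
   ('k \<Rightarrow> 'a::ab_group_add \<Rightarrow> 'a) \<Rightarrow> ('a \<Rightarrow> 'a \<Rightarrow> 'a) \<Rightarrow> 'a \<Rightarrow> ('h \<Rightarrow> 'a \<Rightarrow> 'a) \<Rightarrow> bool" where
  "left_module_algebra sH mH uH \<Delta> \<epsilon> sA m u act \<longleftrightarrow>
     (\<forall>a. Vector_Spaces.linear sH sA (\<lambda>h. act h a)) \<and> (\<forall>h. Vector_Spaces.linear sA sA (act h)) \<and>
     (\<forall>h g a. act (mH h g) a = act h (act g a)) \<and> (\<forall>a. act uH a = a) \<and>
     (\<forall>h a b. act h (m a b) = sum_list (map (\<lambda>(p, q). m (act p a) (act q b)) (\<Delta> h))) \<and>
     (\<forall>h. act h u = sA (\<epsilon> h) u)"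

definition right_module_algebra ::
  "('k::field \<Rightarrow> 'h::ab_group_add \<Rightarrow> 'h) \<Rightarrow> ('h \<Rightarrow> 'h \<Rightarrow> 'h) \<Rightarrow> 'h \<Rightarrow>
   ('h \<Rightarrow> ('h \<times> 'h) list) \<Rightarrow> ('h \<Rightarrow> 'k) \<Rightarrow>
   ('k \<Rightarrow> 'a::ab_group_add \<Rightarrow> 'a) \<Rightarrow> ('a \<Rightarrow> 'a \<Rightarrow> 'a) \<Rightarrow> 'a \<Rightarrow> ('a \<Rightarrow> 'h \<Rightarrow> 'a) \<Rightarrow> bool" where
  "right_module_algebra sH mH uH \<Delta> \<epsilon> sA m u ract \<longleftrightarrow>
     (\<forall>a. Vector_Spaces.linear sH sA (ract a)) \<and> (\<forall>h. Vector_Spaces.linear sA sA (\<lambda>a. ract a h)) \<and>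
     (\<forall>h g a. ract a (mH h g) = ract (ract a h) g) \<and> (\<forall>a. ract a uH = a) \<and>
     (\<forall>h a b. ract (m a b) h = sum_list (map (\<lambda>(p, q). m (ract a p) (ract b q)) (\<Delta> h))) \<and>
     (\<forall>h. ract u h = sA (\<epsilon> h) u)"

definition left_comodule_algebra ::
  "('k::field \<Rightarrow> 'h::ab_group_add \<Rightarrow> 'h) \<Rightarrow> ('h \<Rightarrow> 'h \<Rightarrow> 'h) \<Rightarrow> 'h \<Rightarrow>
   ('h \<Rightarrow> ('h \<times> 'h) list) \<Rightarrow> ('h \<Rightarrow> 'k) \<Rightarrow>
   ('k \<Rightarrow> 'a::ab_group_add \<Rightarrow> 'a) \<Rightarrow> ('a \<Rightarrow> 'a \<Rightarrow> 'a) \<Rightarrow> 'a \<Rightarrow> ('a \<Rightarrow> ('h \<times> 'a) list) \<Rightarrow> bool" where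
  "left_comodule_algebra sH mH uH \<Delta> \<epsilon> sA m u \<psi> \<longleftrightarrow>
     (\<forall>a b. tensor_eq2 sH sA (\<psi> (a + b)) (\<psi> a @ \<psi> b)) \<and>
     (\<forall>c a. tensor_eq2 sH sA (\<psi> (sA c a)) (map (\<lambda>(h, x). (h, sA c x)) (\<psi> a))) \<and>
     (\<forall>a. tensor_eq3 sH sH sA
        [(h1, h2, x). (h, x) \<leftarrow> \<psi> a, (h1, h2) \<leftarrow> \<Delta> h]
        [(h, g, y). (h, x) \<leftarrow> \<psi> a, (g, y) \<leftarrow> \<psi> x]) \<and>
     (\<forall>a. sum_list (map (\<lambda>(h, x). sA (\<epsilon> h) x) (\<psi> a)) = a) \<and>
     (\<forall>a b. tensor_eq2 sH sA (\<psi> (m a b)) [(mH h g, m x y). (h, x) \<leftarrow> \<psi> a, (g, y) \<leftarrow> \<psi> b]) \<and>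
     tensor_eq2 sH sA (\<psi> u) [(uH, u)]"

definition right_comodule_algebra ::
  "('k::field \<Rightarrow> 'h::ab_group_add \<Rightarrow> 'h) \<Rightarrow> ('h \<Rightarrow> 'h \<Rightarrow> 'h) \<Rightarrow> 'h \<Rightarrow>
   ('h \<Rightarrow> ('h \<times> 'h) list) \<Rightarrow> ('h \<Rightarrow> 'k) \<Rightarrow>
   ('k \<Rightarrow> 'a::ab_group_add \<Rightarrow> 'a) \<Rightarrow> ('a \<Rightarrow> 'a \<Rightarrow> 'a) \<Rightarrow> 'a \<Rightarrow> ('a \<Rightarrow> ('a \<times> 'h) list) \<Rightarrow> bool" where
  "right_comodule_algebra sH mH uH \<Delta> \<epsilon> sA m u \<psi> \<longleftrightarrow>
     (\<forall>a b. tensor_eq2 sA sH (\<psi> (a + b)) (\<psi> a @ \<psi> b)) \<and>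
     (\<forall>c a. tensor_eq2 sA sH (\<psi> (sA c a)) (map (\<lambda>(x, h). (sA c x, h)) (\<psi> a))) \<and>
     (\<forall>a. tensor_eq3 sA sH sH
        [(y, g, h). (x, h) \<leftarrow> \<psi> a, (y, g) \<leftarrow> \<psi> x]
        [(x, h1, h2). (x, h) \<leftarrow> \<psi> a, (h1, h2) \<leftarrow> \<Delta> h]) \<and>
     (\<forall>a. sum_list (map (\<lambda>(x, h). sA (\<epsilon> h) x) (\<psi> a)) = a) \<and>
     (\<forall>a b. tensor_eq2 sA sH (\<psi> (m a b)) [(m x y, mH h g). (x, h) \<leftarrow> \<psi> a, (y, g) \<leftarrow> \<psi> b]) \<and>
     tensor_eq2 sA sH (\<psi> u) [(u, uH)]"

definition left_twisted_prod ::
  "('a::ab_group_add \<Rightarrow> 'a \<Rightarrow> 'a) \<Rightarrow> ('h \<Rightarrow> 'a \<Rightarrow> 'a) \<Rightarrow> ('a \<Rightarrow> ('h \<times> 'a) list) \<Rightarrow> 'a \<Rightarrow> 'a \<Rightarrow> 'a" where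
  "left_twisted_prod m act \<psi> a b = sum_list (map (\<lambda>(h, x). m x (act h b)) (\<psi> a))"

definition right_twisted_prod ::
  "('a::ab_group_add \<Rightarrow> 'a \<Rightarrow> 'a) \<Rightarrow> ('a \<Rightarrow> 'h \<Rightarrow> 'a) \<Rightarrow> ('a \<Rightarrow> ('a \<times> 'h) list) \<Rightarrow> 'a \<Rightarrow> 'a \<Rightarrow> 'a" where
  "right_twisted_prod m ract \<psi> a b = sum_list (map (\<lambda>(x, h). m (ract a h) x) (\<psi> b))"

definition lr_twisted_prod ::
  "('a::ab_group_add \<Rightarrow> 'a \<Rightarrow> 'a) \<Rightarrow> ('h \<Rightarrow> 'a \<Rightarrow> 'a) \<Rightarrow> ('a \<Rightarrow> 'h \<Rightarrow> 'a) \<Rightarrow>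
   ('a \<Rightarrow> ('h \<times> 'a) list) \<Rightarrow> ('a \<Rightarrow> ('a \<times> 'h) list) \<Rightarrow> 'a \<Rightarrow> 'a \<Rightarrow> 'a" where
  "lr_twisted_prod m act ract \<psi>l \<psi>r a b =
     sum_list (map (\<lambda>(h, x). sum_list (map (\<lambda>(y, g). m (ract x g) (act h y)) (\<psi>r b))) (\<psi>l a))"

definition left_twisting_datum ::
  "('k::field \<Rightarrow> 'h::ab_group_add \<Rightarrow> 'h) \<Rightarrow> ('h \<Rightarrow> 'h \<Rightarrow> 'h) \<Rightarrow> 'h \<Rightarrow>
   ('h \<Rightarrow> ('h \<times> 'h) list) \<Rightarrow> ('h \<Rightarrow> 'k) \<Rightarrow>
   ('k \<Rightarrow> 'a::ab_group_add \<Rightarrow> 'a) \<Rightarrow> ('a \<Rightarrow> 'a \<Rightarrow> 'a) \<Rightarrow> 'a \<Rightarrow>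
   ('h \<Rightarrow> 'a \<Rightarrow> 'a) \<Rightarrow> ('a \<Rightarrow> ('h \<times> 'a) list) \<Rightarrow> bool" where
  "left_twisting_datum sH mH uH \<Delta> \<epsilon> sA m u act \<psi> \<longleftrightarrow>
     bialgebra sH mH uH \<Delta> \<epsilon> \<and> k_algebra sA m u \<and>
     left_module_algebra sH mH uH \<Delta> \<epsilon> sA m u act \<and>
     left_comodule_algebra sH mH uH \<Delta> \<epsilon> sA m u \<psi> \<and>
     (\<forall>h a. tensor_eq2 sH sA (\<psi> (act h a)) (map (\<lambda>(g, x). (g, act h x)) (\<psi> a)))"

definition right_twisting_datum ::
  "('k::field \<Rightarrow> 'h::ab_group_add \<Rightarrow> 'h) \<Rightarrow> ('h \<Rightarrow> 'h \<Rightarrow> 'h) \<Rightarrow> 'h \<Rightarrow>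
   ('h \<Rightarrow> ('h \<times> 'h) list) \<Rightarrow> ('h \<Rightarrow> 'k) \<Rightarrow>
   ('k \<Rightarrow> 'a::ab_group_add \<Rightarrow> 'a) \<Rightarrow> ('a \<Rightarrow> 'a \<Rightarrow> 'a) \<Rightarrow> 'a \<Rightarrow>
   ('a \<Rightarrow> 'h \<Rightarrow> 'a) \<Rightarrow> ('a \<Rightarrow> ('a \<times> 'h) list) \<Rightarrow> bool" where
  "right_twisting_datum sH mH uH \<Delta> \<epsilon> sA m u ract \<psi> \<longleftrightarrow>
     bialgebra sH mH uH \<Delta> \<epsilon> \<and> k_algebra sA m u \<and>
     right_module_algebra sH mH uH \<Delta> \<epsilon> sA m u ract \<and>
     right_comodule_algebra sH mH uH \<Delta> \<epsilon> sA m u \<psi> \<and>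
     (\<forall>h a. tensor_eq2 sA sH (\<psi> (ract a h)) (map (\<lambda>(x, g). (ract x h, g)) (\<psi> a)))"

definition lr_twisting_datum ::
  "('k::field \<Rightarrow> 'h::ab_group_add \<Rightarrow> 'h) \<Rightarrow> ('h \<Rightarrow> 'h \<Rightarrow> 'h) \<Rightarrow> 'h \<Rightarrow>
   ('h \<Rightarrow> ('h \<times> 'h) list) \<Rightarrow> ('h \<Rightarrow> 'k) \<Rightarrow>
   ('k \<Rightarrow> 'a::ab_group_add \<Rightarrow> 'a) \<Rightarrow> ('a \<Rightarrow> 'a \<Rightarrow> 'a) \<Rightarrow> 'a \<Rightarrow>
   ('h \<Rightarrow> 'a \<Rightarrow> 'a) \<Rightarrow> ('a \<Rightarrow> 'h \<Rightarrow> 'a) \<Rightarrow>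
   ('a \<Rightarrow> ('h \<times> 'a) list) \<Rightarrow> ('a \<Rightarrow> ('a \<times> 'h) list) \<Rightarrow> bool" where
  "lr_twisting_datum sH mH uH \<Delta> \<epsilon> sA m u act ract \<psi>l \<psi>r \<longleftrightarrow>
     bialgebra sH mH uH \<Delta> \<epsilon> \<and> k_algebra sA m u \<and>
     \<comment> \<open>H-bimodule algebra\<close>
     left_module_algebra sH mH uH \<Delta> \<epsilon> sA m u act \<and>
     right_module_algebra sH mH uH \<Delta> \<epsilon> sA m u ract \<and>
     (\<forall>h a g. ract (act h a) g = act h (ract a g)) \<and>
     \<comment> \<open>H-bicomodule algebra\<close>
     left_comodule_algebra sH mH uH \<Delta> \<epsilon> sA m u \<psi>l \<and>
     right_comodule_algebra sH mH uH \<Delta> \<epsilon> sA m u \<psi>r \<and>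
     (\<forall>a. tensor_eq3 sH sA sH
        [(h, y, g). (h, x) \<leftarrow> \<psi>l a, (y, g) \<leftarrow> \<psi>r x]
        [(h, y, g). (x, g) \<leftarrow> \<psi>r a, (h, y) \<leftarrow> \<psi>l x]) \<and>
     \<comment> \<open>compatibilities\<close>
     (\<forall>h a. tensor_eq2 sH sA (\<psi>l (act h a)) (map (\<lambda>(g, x). (g, act h x)) (\<psi>l a))) \<and>
     (\<forall>h a. tensor_eq2 sA sH (\<psi>r (act h a)) (map (\<lambda>(x, g). (act h x, g)) (\<psi>r a))) \<and>
     (\<forall>h a. tensor_eq2 sH sA (\<psi>l (ract a h)) (map (\<lambda>(g, x). (g, ract x h)) (\<psi>l a))) \<and>
     (\<forall>h a. tensor_eq2 sA sH (\<psi>r (ract a h)) (map (\<lambda>(x, g). (ract x h, g)) (\<psi>r a)))"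

end

theory Submission
  imports Defs
begin


lemma vs_field: "vector_space ((*) :: 'k::field \<Rightarrow> 'k \<Rightarrow> 'k)"
  by (simp add: vector_space_def algebra_simps)

lemma lin_add: "Vector_Spaces.linear s1 s2 f \<Longrightarrow> f (x + y) = f x + f y"
  by (simp add: Vector_Spaces.linear_iff)
lemma lin_scale: "Vector_Spaces.linear s1 s2 f \<Longrightarrow> f (s1 c x) = s2 c (f x)"
  by (simp add: Vector_Spaces.linear_iff)
lemma lin_zero: "Vector_Spaces.linear s1 s2 f \<Longrightarrow> f 0 = 0"
  using lin_add[of s1 s2 f 0 0] by simp
lemma lin_vs1: "Vector_Spaces.linear s1 s2 f \<Longrightarrow> vector_space s1"
  by (simp add: Vector_Spaces.linear_iff)
lemma lin_vs2: "Vector_Spaces.linear s1 s2 f \<Longrightarrow> vector_space s2"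
  by (simp add: Vector_Spaces.linear_iff)

lemma lin_id: "vector_space s \<Longrightarrow> Vector_Spaces.linear s s (\<lambda>x. x)"
  by (simp add: Vector_Spaces.linear_iff)
lemma lin_comp: "Vector_Spaces.linear s1 s2 f \<Longrightarrow> Vector_Spaces.linear s2 s3 g \<Longrightarrow>
   Vector_Spaces.linear s1 s3 (\<lambda>x. g (f x))"
  by (simp add: Vector_Spaces.linear_iff)

lemma lin_plus: "Vector_Spaces.linear s1 s2 f \<Longrightarrow> Vector_Spaces.linear s1 s2 g \<Longrightarrow>
   Vector_Spaces.linear s1 s2 (\<lambda>x. f x + g x)"
  by (simp add: Vector_Spaces.linear_iff module.scale_right_distrib module_iff_vector_space algebra_simps)

lemma lin_zero_fun: "vector_space s1 \<Longrightarrow> vector_space s2 \<Longrightarrow> Vector_Spaces.linear s1 s2 (\<lambda>x. 0)"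
  by (simp add: Vector_Spaces.linear_iff module.scale_zero_right module_iff_vector_space)

definition S2 :: "('p \<times> 'q) list \<Rightarrow> ('p \<Rightarrow> 'q \<Rightarrow> 'x::comm_monoid_add) \<Rightarrow> 'x" where
  "S2 L f = sum_list (map (\<lambda>(p, q). f p q) L)"

definition S3 :: "('p \<times> 'q \<times> 'r) list \<Rightarrow> ('p \<Rightarrow> 'q \<Rightarrow> 'r \<Rightarrow> 'x::comm_monoid_add) \<Rightarrow> 'x" where
  "S3 L f = sum_list (map (\<lambda>(p, q, r). f p q r) L)"

lemma S2_Nil[simp]: "S2 [] f = 0" and S2_Cons[simp]: "S2 ((p,q) # L) f = f p q + S2 L f"
  and S2_append[simp]: "S2 (L @ M) f = S2 L f + S2 M f"
  by (simp_all add: S2_def)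

lemma S3_Nil[simp]: "S3 [] f = 0" and S3_Cons[simp]: "S3 ((p,q,r) # L) f = f p q r + S3 L f"
  and S3_append[simp]: "S3 (L @ M) f = S3 L f + S3 M f"
  by (simp_all add: S3_def)

lemma S2_plus: "S2 L (\<lambda>p q. f p q + g p q) = S2 L f + S2 L g"
  by (induction L) (auto simp: algebra_simps)

lemma S2_zero[simp]: "S2 L (\<lambda>p q. 0) = 0"
  by (induction L) auto

lemma S2_swap: "S2 L (\<lambda>p q. S2 M (\<lambda>r s. f p q r s)) = S2 M (\<lambda>r s. S2 L (\<lambda>p q. f p q r s))"
  by (induction L) (auto simp: S2_plus)

lemma S2_cong: "(\<And>p q. (p, q) \<in> set L \<Longrightarrow> f p q = g p q) \<Longrightarrow> S2 L f = S2 L g"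
  by (induction L) auto

lemma lin_S2: "Vector_Spaces.linear s1 s2 f \<Longrightarrow> f (S2 L g) = S2 L (\<lambda>p q. f (g p q))"
  by (induction L) (auto simp: lin_add lin_zero)

lemma lin_S3: "Vector_Spaces.linear s1 s2 f \<Longrightarrow> f (S3 L g) = S3 L (\<lambda>p q r. f (g p q r))"
  by (induction L) (auto simp: lin_add lin_zero)

lemma lin_S2_fun: "vector_space s1 \<Longrightarrow> vector_space s2 \<Longrightarrow>
  (\<And>p q. Vector_Spaces.linear s1 s2 (\<lambda>v. F p q v)) \<Longrightarrow>
  Vector_Spaces.linear s1 s2 (\<lambda>v. S2 L (\<lambda>p q. F p q v))"
proof (induction L)
  case Nil then show ?case by (simp add: lin_zero_fun)
next
  case (Cons a L) then show ?case by (cases a) (simp add: lin_plus)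
qed

lemma S2_comp_concat:
  "S2 (concat (map (\<lambda>(p, q). G p q) L)) f = S2 L (\<lambda>p q. S2 (G p q) f)"
  by (induction L) auto

lemma S3_comp_concat:
  "S3 (concat (map (\<lambda>(p, q). G p q) L)) f = S2 L (\<lambda>p q. S3 (G p q) f)"
  by (induction L) auto

lemma S3_comp_concat3:
  "S3 (concat (map (\<lambda>(p, q, r). G p q r) L)) f = S3 L (\<lambda>p q r. S3 (G p q r) f)"
  by (induction L) auto

lemma S2_single[simp]: "S2 [(p,q)] f = f p q" by simp
lemma S3_single[simp]: "S3 [(p,q,r)] f = f p q r" by simp

lemma S2_map: "S2 (map (\<lambda>(p, q). (g p q, k p q)) L) f = S2 L (\<lambda>p q. f (g p q) (k p q))"
  by (induction L) auto

lemma S3_map2: "S3 (map (\<lambda>(p, q). (f p q, g p q, k p q)) L) \<gamma> = S2 L (\<lambda>p q. \<gamma> (f p q) (g p q) (k p q))"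
  by (induction L) auto

lemma S3_map_Pair: "S3 (map (Pair h) L) \<gamma> = S2 L (\<gamma> h)"
  by (induction L) auto

lemma lin_scalar: "vector_space s \<Longrightarrow> Vector_Spaces.linear s s (s c)"
  by (simp add: Vector_Spaces.linear_iff module.scale_right_distrib module.scale_scale
          module_iff_vector_space mult.commute)

lemma separate:
  assumes vs: "vector_space s"
    and H: "\<And>f. Vector_Spaces.linear s (*) f \<Longrightarrow> f x = f y"
  shows "x = y"
proof (rule ccontr)
  assume ne: "x \<noteq> y"
  define z where "z = x - y"
  have z0: "z \<noteq> 0" using ne by (simp add: z_def)
  interpret V: vector_space s by (rule vs)
  have ind: "V.independent {z}" using z0 by simp
  define B where "B = V.extend_basis {z}"
  have iB: "V.independent B" unfolding B_def by (rule V.independent_extend_basis[OF ind])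
  have sB: "V.span B = UNIV" unfolding B_def by (rule V.span_extend_basis[OF ind])
  have zB: "z \<in> B" unfolding B_def using V.extend_basis_superset[OF ind] by auto
  define f where "f v = V.representation B v z" for v
  have lf: "Vector_Spaces.linear s (*) f"
    unfolding Vector_Spaces.linear_iff f_def
    using vs vs_field V.representation_add[OF iB] V.representation_scale[OF iB] sB by auto
  have "f z = 1" unfolding f_def using V.representation_basis[OF iB zB] by simp
  moreover have "f z = f x - f y" unfolding z_def using lin_add[OF lf, of "x - y" y] by simp
  ultimately show False using H[OF lf] by simp
qed

definition bil :: "('k::field \<Rightarrow> 'v::ab_group_add \<Rightarrow> 'v) \<Rightarrow> ('k \<Rightarrow> 'w::ab_group_add \<Rightarrow> 'w) \<Rightarrow>
   ('k \<Rightarrow> 'x::ab_group_add \<Rightarrow> 'x) \<Rightarrow> ('v \<Rightarrow> 'w \<Rightarrow> 'x) \<Rightarrow> bool" where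
  "bil sV sW sX \<beta> \<longleftrightarrow> (\<forall>w. Vector_Spaces.linear sV sX (\<lambda>v. \<beta> v w)) \<and> (\<forall>v. Vector_Spaces.linear sW sX (\<beta> v))"

definition tril :: "('k::field \<Rightarrow> 'u::ab_group_add \<Rightarrow> 'u) \<Rightarrow> ('k \<Rightarrow> 'v::ab_group_add \<Rightarrow> 'v) \<Rightarrow>
   ('k \<Rightarrow> 'w::ab_group_add \<Rightarrow> 'w) \<Rightarrow> ('k \<Rightarrow> 'x::ab_group_add \<Rightarrow> 'x) \<Rightarrow> ('u \<Rightarrow> 'v \<Rightarrow> 'w \<Rightarrow> 'x) \<Rightarrow> bool" where
  "tril sU sV sW sX \<gamma> \<longleftrightarrow> (\<forall>v w. Vector_Spaces.linear sU sX (\<lambda>u. \<gamma> u v w)) \<and>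
     (\<forall>u w. Vector_Spaces.linear sV sX (\<lambda>v. \<gamma> u v w)) \<and> (\<forall>u v. Vector_Spaces.linear sW sX (\<lambda>w. \<gamma> u v w))"

lemma bilI: "(\<And>w. Vector_Spaces.linear sV sX (\<lambda>v. \<beta> v w)) \<Longrightarrow> (\<And>v. Vector_Spaces.linear sW sX (\<lambda>w. \<beta> v w))
  \<Longrightarrow> bil sV sW sX \<beta>"
  by (simp add: bil_def)

lemma trilI: "(\<And>v w. Vector_Spaces.linear sU sX (\<lambda>u. \<gamma> u v w)) \<Longrightarrow> (\<And>u w. Vector_Spaces.linear sV sX (\<lambda>v. \<gamma> u v w))
  \<Longrightarrow> (\<And>u v. Vector_Spaces.linear sW sX (\<lambda>w. \<gamma> u v w)) \<Longrightarrow> tril sU sV sW sX \<gamma>"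
  by (simp add: tril_def)

lemma bil_form: "bilinear_form sV sW \<beta> = bil sV sW (*) \<beta>"
  by (simp add: bilinear_form_def bil_def)

lemma tril_form: "trilinear_form sU sV sW \<gamma> = tril sU sV sW (*) \<gamma>"
  by (simp add: trilinear_form_def tril_def)

lemma te2:
  assumes "tensor_eq2 sV sW xs ys" "vector_space sX" "bil sV sW sX \<beta>"
  shows "S2 xs \<beta> = S2 ys \<beta>"
proof (rule separate[OF assms(2)])
  fix f assume lf: "Vector_Spaces.linear sX (*) f"
  have "bilinear_form sV sW (\<lambda>v w. f (\<beta> v w))"
    using assms(3) lf unfolding bil_form bil_def
    by (simp add: lin_comp[OF _ lf])
  then have "S2 xs (\<lambda>v w. f (\<beta> v w)) = S2 ys (\<lambda>v w. f (\<beta> v w))"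
    using assms(1) unfolding tensor_eq2_def S2_def by blast
  then show "f (S2 xs \<beta>) = f (S2 ys \<beta>)" by (simp add: lin_S2[OF lf])
qed

lemma te3:
  assumes "tensor_eq3 sU sV sW xs ys" "vector_space sX" "tril sU sV sW sX \<gamma>"
  shows "S3 xs \<gamma> = S3 ys \<gamma>"
proof (rule separate[OF assms(2)])
  fix f assume lf: "Vector_Spaces.linear sX (*) f"
  have "trilinear_form sU sV sW (\<lambda>u v w. f (\<gamma> u v w))"
    using assms(3) lf unfolding tril_form tril_def
    by (simp add: lin_comp[OF _ lf])
  then have "S3 xs (\<lambda>u v w. f (\<gamma> u v w)) = S3 ys (\<lambda>u v w. f (\<gamma> u v w))"
    using assms(1) unfolding tensor_eq3_def S3_def by blast
  then show "f (S3 xs \<gamma>) = f (S3 ys \<gamma>)" by (simp add: lin_S3[OF lf])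
qed

lemma te2I: "(\<And>\<beta>. bil sV sW (*) \<beta> \<Longrightarrow> S2 xs \<beta> = S2 ys \<beta>) \<Longrightarrow> tensor_eq2 sV sW xs ys"
  unfolding tensor_eq2_def bil_form S2_def by blast



locale lrd =
  fixes sH :: "'k::field \<Rightarrow> 'h::ab_group_add \<Rightarrow> 'h"
    and mH :: "'h \<Rightarrow> 'h \<Rightarrow> 'h" and uH :: 'h
    and \<Delta> :: "'h \<Rightarrow> ('h \<times> 'h) list" and \<epsilon> :: "'h \<Rightarrow> 'k"
    and sA :: "'k \<Rightarrow> 'a::ab_group_add \<Rightarrow> 'a"
    and m :: "'a \<Rightarrow> 'a \<Rightarrow> 'a" and u :: 'a
    and act :: "'h \<Rightarrow> 'a \<Rightarrow> 'a" and ract :: "'a \<Rightarrow> 'h \<Rightarrow> 'a"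
    and \<psi>l :: "'a \<Rightarrow> ('h \<times> 'a) list" and \<psi>r :: "'a \<Rightarrow> ('a \<times> 'h) list"
  assumes LR: "lr_twisting_datum sH mH uH \<Delta> \<epsilon> sA m u act ract \<psi>l \<psi>r"
begin

lemma H: "bialgebra sH mH uH \<Delta> \<epsilon>" and A: "k_algebra sA m u"
  and LM: "left_module_algebra sH mH uH \<Delta> \<epsilon> sA m u act"
  and RM: "right_module_algebra sH mH uH \<Delta> \<epsilon> sA m u ract"
  and LC: "left_comodule_algebra sH mH uH \<Delta> \<epsilon> sA m u \<psi>l"
  and RC: "right_comodule_algebra sH mH uH \<Delta> \<epsilon> sA m u \<psi>r"
  using LR by (simp_all add: lr_twisting_datum_def)

lemma vsA: "vector_space sA" using A by (simp add: k_algebra_def)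
lemma vsH: "vector_space sH" using H by (simp add: k_algebra_def bialgebra_def)
lemmas vsK = vs_field

lemma mL: "Vector_Spaces.linear sA sA (\<lambda>a. m a b)" and mR: "Vector_Spaces.linear sA sA (m a)"
  and m_assoc: "m (m a b) c = m a (m b c)" and m_u1: "m u a = a" and m_u2: "m a u = a"
  using A by (simp_all add: k_algebra_def)

lemma mHL: "Vector_Spaces.linear sH sH (\<lambda>a. mH a b)" and mHR: "Vector_Spaces.linear sH sH (mH a)"
  using H by (simp_all add: k_algebra_def bialgebra_def)

lemma actL: "Vector_Spaces.linear sH sA (\<lambda>h. act h a)" and actR: "Vector_Spaces.linear sA sA (act h)"
  and act_mult: "act (mH h g) a = act h (act g a)" and act_one: "act uH a = a"
  and act_m: "act h (m a b) = S2 (\<Delta> h) (\<lambda>p q. m (act p a) (act q b))"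
  and act_u: "act h u = sA (\<epsilon> h) u"
  using LM by (simp_all add: left_module_algebra_def S2_def)

lemma ractL: "Vector_Spaces.linear sH sA (ract a)" and ractR: "Vector_Spaces.linear sA sA (\<lambda>a. ract a h)"
  and ract_mult: "ract a (mH h g) = ract (ract a h) g" and ract_one: "ract a uH = a"
  and ract_m: "ract (m a b) h = S2 (\<Delta> h) (\<lambda>p q. m (ract a p) (ract b q))"
  and ract_u: "ract u h = sA (\<epsilon> h) u"
  using RM by (simp_all add: right_module_algebra_def S2_def)

lemma bimod: "ract (act h a) g = act h (ract a g)"
  using LR by (simp add: lr_twisting_datum_def)

lemma l_m1: "Vector_Spaces.linear s sA F \<Longrightarrow> Vector_Spaces.linear s sA (\<lambda>v. m (F v) b)"
  by (rule lin_comp[OF _ mL])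
lemma l_m2: "Vector_Spaces.linear s sA F \<Longrightarrow> Vector_Spaces.linear s sA (\<lambda>v. m a (F v))"
  by (rule lin_comp[OF _ mR])
lemma l_act1: "Vector_Spaces.linear s sH F \<Longrightarrow> Vector_Spaces.linear s sA (\<lambda>v. act (F v) a)"
  by (rule lin_comp[OF _ actL])
lemma l_act2: "Vector_Spaces.linear s sA F \<Longrightarrow> Vector_Spaces.linear s sA (\<lambda>v. act h (F v))"
  by (rule lin_comp[OF _ actR])
lemma l_ract1: "Vector_Spaces.linear s sA F \<Longrightarrow> Vector_Spaces.linear s sA (\<lambda>v. ract (F v) h)"
  by (rule lin_comp[OF _ ractR])
lemma l_ract2: "Vector_Spaces.linear s sH F \<Longrightarrow> Vector_Spaces.linear s sA (\<lambda>v. ract a (F v))"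
  by (rule lin_comp[OF _ ractL])
lemma l_mH1: "Vector_Spaces.linear s sH F \<Longrightarrow> Vector_Spaces.linear s sH (\<lambda>v. mH (F v) b)"
  by (rule lin_comp[OF _ mHL])
lemma l_mH2: "Vector_Spaces.linear s sH F \<Longrightarrow> Vector_Spaces.linear s sH (\<lambda>v. mH a (F v))"
  by (rule lin_comp[OF _ mHR])
lemma l_idA: "Vector_Spaces.linear sA sA (\<lambda>v. v)" by (rule lin_id[OF vsA])
lemma l_idH: "Vector_Spaces.linear sH sH (\<lambda>v. v)" by (rule lin_id[OF vsH])

lemma l_b1: "bil sV sW sX \<beta> \<Longrightarrow> Vector_Spaces.linear s sV F \<Longrightarrow> Vector_Spaces.linear s sX (\<lambda>v. \<beta> (F v) w)"
  unfolding bil_def by (rule lin_comp[where g="\<lambda>v. \<beta> v w"]) auto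
lemma l_b2: "bil sV sW sX \<beta> \<Longrightarrow> Vector_Spaces.linear s sW F \<Longrightarrow> Vector_Spaces.linear s sX (\<lambda>v. \<beta> w (F v))"
  unfolding bil_def by (rule lin_comp[where g="\<beta> w"]) auto

lemmas lin_rules = l_m1 l_m2 l_act1 l_act2 l_ract1 l_ract2 l_mH1 l_mH2 l_idA l_idH lin_S2_fun vsA vsH vsK

lemma psil_add: "tensor_eq2 sH sA (\<psi>l (a + b)) (\<psi>l a @ \<psi>l b)"
  and psil_scale: "tensor_eq2 sH sA (\<psi>l (sA c a)) (map (\<lambda>(h, x). (h, sA c x)) (\<psi>l a))"
  and psil_coassoc: "tensor_eq3 sH sH sA
        [(h1, h2, x). (h, x) \<leftarrow> \<psi>l a, (h1, h2) \<leftarrow> \<Delta> h]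
        [(h, g, y). (h, x) \<leftarrow> \<psi>l a, (g, y) \<leftarrow> \<psi>l x]"
  and psil_counit: "S2 (\<psi>l a) (\<lambda>h x. sA (\<epsilon> h) x) = a"
  and psil_m: "tensor_eq2 sH sA (\<psi>l (m a b)) [(mH h g, m x y). (h, x) \<leftarrow> \<psi>l a, (g, y) \<leftarrow> \<psi>l b]"
  and psil_u: "tensor_eq2 sH sA (\<psi>l u) [(uH, u)]"
  using LC by (simp_all add: left_comodule_algebra_def S2_def)

lemma psir_add: "tensor_eq2 sA sH (\<psi>r (a + b)) (\<psi>r a @ \<psi>r b)"
  and psir_scale: "tensor_eq2 sA sH (\<psi>r (sA c a)) (map (\<lambda>(x, h). (sA c x, h)) (\<psi>r a))"
  and psir_coassoc: "tensor_eq3 sA sH sH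
        [(y, g, h). (x, h) \<leftarrow> \<psi>r a, (y, g) \<leftarrow> \<psi>r x]
        [(x, h1, h2). (x, h) \<leftarrow> \<psi>r a, (h1, h2) \<leftarrow> \<Delta> h]"
  and psir_counit: "S2 (\<psi>r a) (\<lambda>x h. sA (\<epsilon> h) x) = a"
  and psir_m: "tensor_eq2 sA sH (\<psi>r (m a b)) [(m x y, mH h g). (x, h) \<leftarrow> \<psi>r a, (y, g) \<leftarrow> \<psi>r b]"
  and psir_u: "tensor_eq2 sA sH (\<psi>r u) [(u, uH)]"
  using RC by (simp_all add: right_comodule_algebra_def S2_def)

lemma bicoassoc: "tensor_eq3 sH sA sH
        [(h, y, g). (h, x) \<leftarrow> \<psi>l a, (y, g) \<leftarrow> \<psi>r x]
        [(h, y, g). (x, g) \<leftarrow> \<psi>r a, (h, y) \<leftarrow> \<psi>l x]"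
  and cl_act: "tensor_eq2 sH sA (\<psi>l (act h a)) (map (\<lambda>(g, x). (g, act h x)) (\<psi>l a))"
  and cr_act: "tensor_eq2 sA sH (\<psi>r (act h a)) (map (\<lambda>(x, g). (act h x, g)) (\<psi>r a))"
  and cl_ract: "tensor_eq2 sH sA (\<psi>l (ract a h)) (map (\<lambda>(g, x). (g, ract x h)) (\<psi>l a))"
  and cr_ract: "tensor_eq2 sA sH (\<psi>r (ract a h)) (map (\<lambda>(x, g). (ract x h, g)) (\<psi>r a))"
  using LR by (simp_all add: lr_twisting_datum_def)

context
  fixes sX :: "'k \<Rightarrow> 'x::ab_group_add \<Rightarrow> 'x"
  assumes vsX: "vector_space sX"
begin

context
  fixes \<beta> :: "'h \<Rightarrow> 'a \<Rightarrow> 'x"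
  assumes b: "bil sH sA sX \<beta>"
begin

lemma PL_add: "S2 (\<psi>l (a + a')) \<beta> = S2 (\<psi>l a) \<beta> + S2 (\<psi>l a') \<beta>"
  using te2[OF psil_add vsX b] by simp

lemma PL_scale: "S2 (\<psi>l (sA c a)) \<beta> = sX c (S2 (\<psi>l a) \<beta>)"
proof -
  have "S2 (\<psi>l (sA c a)) \<beta> = S2 (\<psi>l a) (\<lambda>h x. \<beta> h (sA c x))"
    using te2[OF psil_scale vsX b] by (simp add: S2_map)
  also have "\<dots> = S2 (\<psi>l a) (\<lambda>h x. sX c (\<beta> h x))"
    using b by (intro S2_cong) (simp add: bil_def lin_scale)
  also have "\<dots> = sX c (S2 (\<psi>l a) \<beta>)"
    using lin_S2[OF lin_scalar[OF vsX], of c "\<psi>l a" \<beta>] by simp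
  finally show ?thesis .
qed

lemma PL_lin: "Vector_Spaces.linear sA sX (\<lambda>a. S2 (\<psi>l a) \<beta>)"
  using vsA vsX by (simp add: Vector_Spaces.linear_iff PL_add PL_scale)

lemma PL_m: "S2 (\<psi>l (m a a')) \<beta> = S2 (\<psi>l a) (\<lambda>h x. S2 (\<psi>l a') (\<lambda>g y. \<beta> (mH h g) (m x y)))"
  using te2[OF psil_m vsX b] by (simp add: S2_comp_concat S2_map)

lemma PL_act: "S2 (\<psi>l (act k a)) \<beta> = S2 (\<psi>l a) (\<lambda>h x. \<beta> h (act k x))"
  using te2[OF cl_act vsX b] by (simp add: S2_map)

lemma PL_ract: "S2 (\<psi>l (ract a k)) \<beta> = S2 (\<psi>l a) (\<lambda>h x. \<beta> h (ract x k))"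
  using te2[OF cl_ract vsX b] by (simp add: S2_map)

lemma PL_u: "S2 (\<psi>l u) \<beta> = \<beta> uH u"
  using te2[OF psil_u vsX b] by simp

end

context
  fixes \<beta> :: "'a \<Rightarrow> 'h \<Rightarrow> 'x"
  assumes b: "bil sA sH sX \<beta>"
begin

lemma PR_add: "S2 (\<psi>r (a + a')) \<beta> = S2 (\<psi>r a) \<beta> + S2 (\<psi>r a') \<beta>"
  using te2[OF psir_add vsX b] by simp

lemma PR_scale: "S2 (\<psi>r (sA c a)) \<beta> = sX c (S2 (\<psi>r a) \<beta>)"
proof -
  have "S2 (\<psi>r (sA c a)) \<beta> = S2 (\<psi>r a) (\<lambda>x h. \<beta> (sA c x) h)"
    using te2[OF psir_scale vsX b] by (simp add: S2_map)
  also have "\<dots> = S2 (\<psi>r a) (\<lambda>x h. sX c (\<beta> x h))"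
  proof (intro S2_cong)
    fix x h
    have "Vector_Spaces.linear sA sX (\<lambda>v. \<beta> v h)" using b by (simp add: bil_def)
    from lin_scale[OF this] show "\<beta> (sA c x) h = sX c (\<beta> x h)" .
  qed
  also have "\<dots> = sX c (S2 (\<psi>r a) \<beta>)"
    using lin_S2[OF lin_scalar[OF vsX], of c "\<psi>r a" \<beta>] by simp
  finally show ?thesis .
qed

lemma PR_lin: "Vector_Spaces.linear sA sX (\<lambda>a. S2 (\<psi>r a) \<beta>)"
  using vsA vsX by (simp add: Vector_Spaces.linear_iff PR_add PR_scale)

lemma PR_m: "S2 (\<psi>r (m a a')) \<beta> = S2 (\<psi>r a) (\<lambda>x h. S2 (\<psi>r a') (\<lambda>y g. \<beta> (m x y) (mH h g)))"
  using te2[OF psir_m vsX b] by (simp add: S2_comp_concat S2_map)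

lemma PR_act: "S2 (\<psi>r (act k a)) \<beta> = S2 (\<psi>r a) (\<lambda>x h. \<beta> (act k x) h)"
  using te2[OF cr_act vsX b] by (simp add: S2_map)

lemma PR_ract: "S2 (\<psi>r (ract a k)) \<beta> = S2 (\<psi>r a) (\<lambda>x h. \<beta> (ract x k) h)"
  using te2[OF cr_ract vsX b] by (simp add: S2_map)

lemma PR_u: "S2 (\<psi>r u) \<beta> = \<beta> u uH"
  using te2[OF psir_u vsX b] by simp

end

lemma PL_coassoc: "tril sH sH sA sX \<gamma> \<Longrightarrow>
   S2 (\<psi>l a) (\<lambda>h x. S2 (\<Delta> h) (\<lambda>h1 h2. \<gamma> h1 h2 x)) = S2 (\<psi>l a) (\<lambda>h x. S2 (\<psi>l x) (\<lambda>g y. \<gamma> h g y))"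
  using te3[OF psil_coassoc vsX] by (simp add: S3_comp_concat S3_map2 S3_map_Pair)

lemma PR_coassoc: "tril sA sH sH sX \<gamma> \<Longrightarrow>
   S2 (\<psi>r a) (\<lambda>x h. S2 (\<psi>r x) (\<lambda>y g. \<gamma> y g h)) = S2 (\<psi>r a) (\<lambda>x h. S2 (\<Delta> h) (\<lambda>h1 h2. \<gamma> x h1 h2))"
  using te3[OF psir_coassoc vsX] by (simp add: S3_comp_concat S3_map2 S3_map_Pair)

lemma bi_coassoc: "tril sH sA sH sX \<gamma> \<Longrightarrow>
   S2 (\<psi>l a) (\<lambda>h x. S2 (\<psi>r x) (\<lambda>y g. \<gamma> h y g)) = S2 (\<psi>r a) (\<lambda>x g. S2 (\<psi>l x) (\<lambda>h y. \<gamma> h y g))"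
  using te3[OF bicoassoc vsX] by (simp add: S3_comp_concat S3_map2 S3_map_Pair)

end

lemma l_PL: "bil sH sA sX \<beta> \<Longrightarrow> vector_space sX \<Longrightarrow> Vector_Spaces.linear s sA F \<Longrightarrow>
   Vector_Spaces.linear s sX (\<lambda>v. S2 (\<psi>l (F v)) \<beta>)"
  by (rule lin_comp[OF _ PL_lin])
lemma l_PR: "bil sA sH sX \<beta> \<Longrightarrow> vector_space sX \<Longrightarrow> Vector_Spaces.linear s sA F \<Longrightarrow>
   Vector_Spaces.linear s sX (\<lambda>v. S2 (\<psi>r (F v)) \<beta>)"
  by (rule lin_comp[OF _ PR_lin])

end


context lrd
begin

lemmas lin_simps = bil_def tril_def l_m1 l_m2 l_act1 l_act2 l_ract1 l_ract2 l_mH1 l_mH2 l_idA l_idH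
   lin_S2_fun vsA vsH vsK l_PL l_PR

lemma m_S2_1: "m (S2 L g) b = S2 L (\<lambda>p q. m (g p q) b)" by (rule lin_S2[OF mL])
lemma m_S2_2: "m a (S2 L g) = S2 L (\<lambda>p q. m a (g p q))" by (rule lin_S2[OF mR])
lemma act_S2: "act h (S2 L g) = S2 L (\<lambda>p q. act h (g p q))" by (rule lin_S2[OF actR])
lemma ract_S2: "ract (S2 L g) h = S2 L (\<lambda>p q. ract (g p q) h)" by (rule lin_S2[OF ractR])
lemma PL_S2: "vector_space sX \<Longrightarrow> bil sH sA sX \<beta> \<Longrightarrow> S2 (\<psi>l (S2 L g)) \<beta> = S2 L (\<lambda>p q. S2 (\<psi>l (g p q)) \<beta>)"
  by (rule lin_S2[OF PL_lin])
lemma PR_S2: "vector_space sX \<Longrightarrow> bil sA sH sX \<beta> \<Longrightarrow> S2 (\<psi>r (S2 L g)) \<beta> = S2 L (\<lambda>p q. S2 (\<psi>r (g p q)) \<beta>)"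
  by (rule lin_S2[OF PR_lin])

lemmas S2_simps = m_S2_1 m_S2_2 act_S2 ract_S2

definition star where "star a b = S2 (\<psi>l a) (\<lambda>h x. m x (act h b))"
definition dia where "dia a b = S2 (\<psi>r b) (\<lambda>x h. m (ract a h) x)"

lemma star_assoc: "star (star a b) c = star a (star b c)"
proof -
  have "star (star a b) c = S2 (\<psi>l a) (\<lambda>k z. S2 (\<psi>l z) (\<lambda>h1 z1. S2 (\<psi>l b) (\<lambda>g y. m (m z1 (act k y)) (act (mH h1 g) c))))"
    unfolding star_def
    by (simp add: PL_S2[OF vsA] PL_m[OF vsA] PL_act[OF vsA] lin_simps)
  also have "\<dots> = S2 (\<psi>l a) (\<lambda>k z. S2 (\<Delta> k) (\<lambda>k1 k2. S2 (\<psi>l b) (\<lambda>g y. m (m z (act k1 y)) (act (mH k2 g) c))))"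
    by (rule PL_coassoc[OF vsA, symmetric]) (simp add: lin_simps)
  also have "\<dots> = star a (star b c)"
    unfolding star_def
    by (simp add: S2_simps act_m act_mult m_assoc S2_swap[of "\<Delta> _"])
  finally show ?thesis .
qed

lemma star_eq: "left_twisted_prod m act \<psi>l = star"
  by (auto simp: fun_eq_iff left_twisted_prod_def star_def S2_def)
lemma dia_eq: "right_twisted_prod m ract \<psi>r = dia"
  by (auto simp: fun_eq_iff right_twisted_prod_def dia_def S2_def)

lemma star_alg: "k_algebra sA star u"
proof -
  have "star u a = a" for a unfolding star_def by (simp add: PL_u[OF vsA] lin_simps m_u1 act_one)
  moreover have "star a u = a" for a
  proof -
    have "star a u = S2 (\<psi>l a) (\<lambda>h x. sA (\<epsilon> h) x)"
      unfolding star_def act_u lin_scale[OF mR] m_u2 ..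
    then show ?thesis by (simp add: psil_counit)
  qed
  ultimately show ?thesis
    unfolding k_algebra_def using star_assoc vsA unfolding star_def
    by (simp add: lin_simps)
qed

lemma star_ract: "ract (star a b) h = S2 (\<Delta> h) (\<lambda>p q. star (ract a p) (ract b q))"
  unfolding star_def
  by (simp add: S2_simps ract_m bimod PL_ract[OF vsA] lin_simps S2_swap[of "\<Delta> h"])

lemma star_psir: "tensor_eq2 sA sH (\<psi>r (star a b)) [(star x y, mH h g). (x, h) \<leftarrow> \<psi>r a, (y, g) \<leftarrow> \<psi>r b]"
proof (rule te2I)
  fix \<beta> :: "'a \<Rightarrow> 'h \<Rightarrow> 'k" assume hb: "bil sA sH (*) \<beta>"
  have bS2: "\<beta> (S2 L g) w = S2 L (\<lambda>p q. \<beta> (g p q) w)" for L g w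
    using hb unfolding bil_def by (intro lin_S2) auto
  have "S2 (\<psi>r (star a b)) \<beta> =
     S2 (\<psi>l a) (\<lambda>k x. S2 (\<psi>r x) (\<lambda>x' h. S2 (\<psi>r b) (\<lambda>y g. \<beta> (m x' (act k y)) (mH h g))))"
    unfolding star_def using hb
    by (simp add: PR_S2[OF vsK] PR_m[OF vsK] PR_act[OF vsK] lin_simps l_b1[OF hb] l_b2[OF hb])
  also have "\<dots> = S2 (\<psi>r a) (\<lambda>x h. S2 (\<psi>l x) (\<lambda>k x'. S2 (\<psi>r b) (\<lambda>y g. \<beta> (m x' (act k y)) (mH h g))))"
    by (rule bi_coassoc[OF vsK]) (simp add: lin_simps l_b1[OF hb] l_b2[OF hb])
  also have "\<dots> = S2 [(star x y, mH h g). (x, h) \<leftarrow> \<psi>r a, (y, g) \<leftarrow> \<psi>r b] \<beta>"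
    unfolding star_def
    by (simp add: S2_comp_concat S2_map bS2 S2_swap[of "\<psi>r b"])
  finally show "S2 (\<psi>r (star a b)) \<beta> = S2 [(star x y, mH h g). (x, h) \<leftarrow> \<psi>r a, (y, g) \<leftarrow> \<psi>r b] \<beta>" .
qed

lemma part1: "right_twisting_datum sH mH uH \<Delta> \<epsilon> sA star u ract \<psi>r"
  unfolding right_twisting_datum_def
  using H star_alg RM RC LR star_ract star_psir
  by (simp add: right_module_algebra_def right_comodule_algebra_def lr_twisting_datum_def S2_def)

lemma part2: "right_twisted_prod star ract \<psi>r a b = lr_twisted_prod m act ract \<psi>l \<psi>r a b"
proof -
  have "right_twisted_prod star ract \<psi>r a b = S2 (\<psi>r b) (\<lambda>y g. star (ract a g) y)"
    by (simp add: right_twisted_prod_def S2_def)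
  also have "\<dots> = S2 (\<psi>l a) (\<lambda>h x. S2 (\<psi>r b) (\<lambda>y g. m (ract x g) (act h y)))"
    unfolding star_def by (simp add: PL_ract[OF vsA] lin_simps S2_swap[of "\<psi>r b"])
  also have "\<dots> = lr_twisted_prod m act ract \<psi>l \<psi>r a b"
    by (simp add: lr_twisted_prod_def S2_def)
  finally show ?thesis .
qed

lemma dia_assoc: "dia (dia a b) c = dia a (dia b c)"
proof -
  have "dia a (dia b c) = S2 (\<psi>r c) (\<lambda>x h. S2 (\<psi>r x) (\<lambda>x' h'. S2 (\<psi>r b) (\<lambda>y g. m (ract a (mH g h')) (m (ract y h) x'))))"
    unfolding dia_def
    by (simp add: PR_S2[OF vsA] PR_m[OF vsA] PR_ract[OF vsA] lin_simps S2_swap[of "\<psi>r b"])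
  also have "\<dots> = S2 (\<psi>r c) (\<lambda>x h. S2 (\<Delta> h) (\<lambda>h1 h2. S2 (\<psi>r b) (\<lambda>y g. m (ract a (mH g h1)) (m (ract y h2) x))))"
    by (rule PR_coassoc[OF vsA]) (simp add: lin_simps)
  also have "\<dots> = dia (dia a b) c"
    unfolding dia_def
    by (simp add: S2_simps ract_m ract_mult m_assoc S2_swap[of "\<Delta> _"])
  finally show ?thesis by simp
qed

lemma dia_alg: "k_algebra sA dia u"
proof -
  have "dia a u = a" for a unfolding dia_def by (simp add: PR_u[OF vsA] lin_simps m_u2 ract_one)
  moreover have "dia u a = a" for a
  proof -
    have "dia u a = S2 (\<psi>r a) (\<lambda>x h. sA (\<epsilon> h) x)"
      unfolding dia_def ract_u lin_scale[OF mL] m_u1 ..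
    then show ?thesis by (simp add: psir_counit)
  qed
  ultimately show ?thesis
    unfolding k_algebra_def using dia_assoc vsA unfolding dia_def
    by (simp add: lin_simps)
qed

lemma dia_act: "act h (dia a b) = S2 (\<Delta> h) (\<lambda>p q. dia (act p a) (act q b))"
  unfolding dia_def
  by (simp add: S2_simps act_m bimod PR_act[OF vsA] lin_simps S2_swap[of "\<Delta> h"])

lemma dia_psil: "tensor_eq2 sH sA (\<psi>l (dia a b)) [(mH h g, dia x y). (h, x) \<leftarrow> \<psi>l a, (g, y) \<leftarrow> \<psi>l b]"
proof (rule te2I)
  fix \<beta> :: "'h \<Rightarrow> 'a \<Rightarrow> 'k" assume hb: "bil sH sA (*) \<beta>"
  have bS2: "\<beta> w (S2 L g) = S2 L (\<lambda>p q. \<beta> w (g p q))" for L g w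
    using hb unfolding bil_def by (intro lin_S2) auto
  have "S2 (\<psi>l (dia a b)) \<beta> =
     S2 (\<psi>l a) (\<lambda>h x. S2 (\<psi>r b) (\<lambda>y g. S2 (\<psi>l y) (\<lambda>k z. \<beta> (mH h k) (m (ract x g) z))))"
    unfolding dia_def using hb
    by (simp add: PL_S2[OF vsK] PL_m[OF vsK] PL_ract[OF vsK] lin_simps l_b1[OF hb] l_b2[OF hb]
        S2_swap[of "\<psi>r b"])
  also have "\<dots> = S2 (\<psi>l a) (\<lambda>h x. S2 (\<psi>l b) (\<lambda>k y. S2 (\<psi>r y) (\<lambda>z g. \<beta> (mH h k) (m (ract x g) z))))"
    by (intro S2_cong bi_coassoc[OF vsK, symmetric]) (simp add: lin_simps l_b1[OF hb] l_b2[OF hb])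
  also have "\<dots> = S2 [(mH h g, dia x y). (h, x) \<leftarrow> \<psi>l a, (g, y) \<leftarrow> \<psi>l b] \<beta>"
    unfolding dia_def
    by (simp add: S2_comp_concat S2_map bS2)
  finally show "S2 (\<psi>l (dia a b)) \<beta> = S2 [(mH h g, dia x y). (h, x) \<leftarrow> \<psi>l a, (g, y) \<leftarrow> \<psi>l b] \<beta>" .
qed

lemma part3: "left_twisting_datum sH mH uH \<Delta> \<epsilon> sA dia u act \<psi>l"
  unfolding left_twisting_datum_def
  using H dia_alg LM LC LR dia_act dia_psil
  by (simp add: left_module_algebra_def left_comodule_algebra_def lr_twisting_datum_def S2_def)

lemma part4: "left_twisted_prod dia act \<psi>l a b = lr_twisted_prod m act ract \<psi>l \<psi>r a b"
proof -
  have "left_twisted_prod dia act \<psi>l a b = S2 (\<psi>l a) (\<lambda>h x. dia x (act h b))"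
    by (simp add: left_twisted_prod_def S2_def)
  also have "\<dots> = S2 (\<psi>l a) (\<lambda>h x. S2 (\<psi>r b) (\<lambda>y g. m (ract x g) (act h y)))"
    unfolding dia_def by (simp add: PR_act[OF vsA] lin_simps)
  also have "\<dots> = lr_twisted_prod m act ract \<psi>l \<psi>r a b"
    by (simp add: lr_twisted_prod_def S2_def)
  finally show ?thesis .
qed

end

theorem proposition4p5:
  fixes sH :: "'k::field \<Rightarrow> 'h::ab_group_add \<Rightarrow> 'h"
    and mH :: "'h \<Rightarrow> 'h \<Rightarrow> 'h" and uH :: 'h
    and \<Delta> :: "'h \<Rightarrow> ('h \<times> 'h) list" and \<epsilon> :: "'h \<Rightarrow> 'k"
    and sA :: "'k \<Rightarrow> 'a::ab_group_add \<Rightarrow> 'a"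
    and m :: "'a \<Rightarrow> 'a \<Rightarrow> 'a" and u :: 'a
    and act :: "'h \<Rightarrow> 'a \<Rightarrow> 'a" and ract :: "'a \<Rightarrow> 'h \<Rightarrow> 'a"
    and \<psi>l :: "'a \<Rightarrow> ('h \<times> 'a) list" and \<psi>r :: "'a \<Rightarrow> ('a \<times> 'h) list"
  assumes H: "bialgebra sH mH uH \<Delta> \<epsilon>"
    and A: "k_algebra sA m u"
    and LR: "lr_twisting_datum sH mH uH \<Delta> \<epsilon> sA m u act ract \<psi>l \<psi>r"
  shows "right_twisting_datum sH mH uH \<Delta> \<epsilon> sA (left_twisted_prod m act \<psi>l) u ract \<psi>r \<and>
         (\<forall>a b. right_twisted_prod (left_twisted_prod m act \<psi>l) ract \<psi>r a b
                  = lr_twisted_prod m act ract \<psi>l \<psi>r a b) \<and>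
         left_twisting_datum sH mH uH \<Delta> \<epsilon> sA (right_twisted_prod m ract \<psi>r) u act \<psi>l \<and>
         (\<forall>a b. left_twisted_prod (right_twisted_prod m ract \<psi>r) act \<psi>l a b
                  = lr_twisted_prod m act ract \<psi>l \<psi>r a b)"
proof -
  interpret lrd sH mH uH \<Delta> \<epsilon> sA m u act ract \<psi>l \<psi>r
    by (rule lrd.intro[OF LR])
  show ?thesis
    unfolding star_eq dia_eq using part1 part2 part3 part4 by simp
qed

end
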